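(* For a polymatroid $\mathrm P$ on $E$ of type $\mathbf a$, one has $\mathrm M_\pi(\mathrm P^\perp)=\mathrm M_\pi(\mathrm P)^\perp$.
   Context: $E=\{1,\dots,m\}$, $\mathbf a\in\mathbb Z^m_{\ge0}$, $n=\sum a_i$, $\widetilde E$ an $n$-element set, $\pi:\widetilde E\to E$ with $|\pi^{-1}(i)|=a_i$. Polymatroid of type $\mathbf a$: submodular monotone $\operatorname{rk}_{\mathrm P}:2^E\to\mathbb Z_{\ge0}$ with $\operatorname{rk}_{\mathrm P}(\emptyset)=0$, $\operatorname{rk}_{\mathrm P}(\{i\})\le a_i$, rank $r=\operatorname{rk}_{\mathrm P}(E)$. Its dual $\mathrm P^\perp$ is the type-$\mathbf a$ polymatroid with $\operatorname{rk}_{\mathrm P^\perp}(S)=\sum_{i\in S}a_i+\operatorname{rk}_{\mathrm P}(E\setminus S)-r$. The multisymmetric lift $\mathrm M_\pi(\mathrm P)$ is the matroid on $\widetilde E$ with rank function $\operatorname{rk}(U)=\min_{A\subseteq E}\{\operatorname{rk}_{\mathrm P}(A)+|U\setminus\pi^{-1}(A)|\}$. $\mathrm M^\perp$ is the usual matroid dual. *)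

theory Defs
  imports Main
begin

definition polymatroid_of_type ::
    "nat \<Rightarrow> (nat \<Rightarrow> nat) \<Rightarrow> (nat set \<Rightarrow> int) \<Rightarrow> bool" where
  "polymatroid_of_type m a rk \<longleftrightarrow>
     rk {} = 0 \<and>
     (\<forall>A. A \<subseteq> {1..m} \<longrightarrow> rk A \<ge> 0) \<and>
     (\<forall>A B. A \<subseteq> B \<and> B \<subseteq> {1..m} \<longrightarrow> rk A \<le> rk B) \<and>
     (\<forall>A B. A \<subseteq> {1..m} \<and> B \<subseteq> {1..m} \<longrightarrow> rk (A \<union> B) + rk (A \<inter> B) \<le> rk A + rk B) \<and>
     (\<forall>i\<in>{1..m}. rk {i} \<le> int (a i))"

definition polymatroid_dual ::
    "nat \<Rightarrow> (nat \<Rightarrow> nat) \<Rightarrow> (nat set \<Rightarrow> int) \<Rightarrow> nat set \<Rightarrow> int" where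
  "polymatroid_dual m a rk S = int (\<Sum>i\<in>S. a i) + rk ({1..m} - S) - rk {1..m}"

definition multisym_lift ::
    "nat \<Rightarrow> ('b \<Rightarrow> nat) \<Rightarrow> (nat set \<Rightarrow> int) \<Rightarrow> 'b set \<Rightarrow> int" where
  "multisym_lift m \<pi> rk U = Min {rk A + int (card (U - \<pi> -` A)) | A. A \<subseteq> {1..m}}"

definition matroid_dual_rank :: "'b set \<Rightarrow> ('b set \<Rightarrow> int) \<Rightarrow> 'b set \<Rightarrow> int" where
  "matroid_dual_rank X rk U = int (card U) + rk (X - U) - rk X"

end

theory Submission
  imports Defs
begin

lemma fiber_card:
  assumes "finite Et" "A \<subseteq> {1..m::nat}" "\<forall>i\<in>{1..m}. card {x\<in>Et. \<pi> x = i} = a i"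
  shows "card {x\<in>Et. \<pi> x \<in> A} = (\<Sum>i\<in>A. a i)"
proof -
  have fA: "finite A" using assms(2) finite_subset by blast
  have eq: "{x\<in>Et. \<pi> x \<in> A} = (\<Union>i\<in>A. {x\<in>Et. \<pi> x = i})" by blast
  have "card (\<Union>i\<in>A. {x\<in>Et. \<pi> x = i}) = (\<Sum>i\<in>A. card {x\<in>Et. \<pi> x = i})"
    by (rule card_UN_disjoint) (use fA assms(1) in auto)
  also have "\<dots> = (\<Sum>i\<in>A. a i)" using assms(2,3) by (intro sum.cong) auto
  finally show ?thesis using eq by simp
qed

lemma poly_props:
  assumes P: "polymatroid_of_type m a rk"
  shows "\<forall>A. A \<subseteq> {1..m} \<longrightarrow> rk A \<ge> 0"
      "\<forall>A B. A \<subseteq> {1..m} \<and> B \<subseteq> {1..m} \<longrightarrow> rk (A \<union> B) + rk (A \<inter> B) \<le> rk A + rk B"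
      "\<forall>i\<in>{1..m}. rk {i} \<le> int (a i)"
proof -
  have Q: "rk {} = 0 \<and>
     (\<forall>A. A \<subseteq> {1..m} \<longrightarrow> rk A \<ge> 0) \<and>
     (\<forall>A B. A \<subseteq> B \<and> B \<subseteq> {1..m} \<longrightarrow> rk A \<le> rk B) \<and>
     (\<forall>A B. A \<subseteq> {1..m} \<and> B \<subseteq> {1..m} \<longrightarrow> rk (A \<union> B) + rk (A \<inter> B) \<le> rk A + rk B) \<and>
     (\<forall>i\<in>{1..m}. rk {i} \<le> int (a i))" using P unfolding polymatroid_of_type_def .
  show "\<forall>A. A \<subseteq> {1..m} \<longrightarrow> rk A \<ge> 0" using conjunct1[OF conjunct2[OF Q]] .
  show "\<forall>A B. A \<subseteq> {1..m} \<and> B \<subseteq> {1..m} \<longrightarrow> rk (A \<union> B) + rk (A \<inter> B) \<le> rk A + rk B"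
    using conjunct1[OF conjunct2[OF conjunct2[OF conjunct2[OF Q]]]] .
  show "\<forall>i\<in>{1..m}. rk {i} \<le> int (a i)"
    using conjunct2[OF conjunct2[OF conjunct2[OF conjunct2[OF Q]]]] .
qed

lemma subadd:
  assumes P: "polymatroid_of_type m a rk" and B: "B \<subseteq> {1..m}"
  shows "C \<subseteq> {1..m} \<Longrightarrow> rk (B \<union> C) \<le> rk B + int (\<Sum>i\<in>C. a i)"
proof -
  assume C: "C \<subseteq> {1..m}"
  have fC: "finite C" using C finite_subset by blast
  from fC C show ?thesis
  proof (induction C rule: finite_induct)
    case empty then show ?case by simp
  next
    case (insert i C)
    have iE: "i \<in> {1..m}" and CE: "C \<subseteq> {1..m}" using insert.prems by auto
    have Pd: "\<forall>A. A \<subseteq> {1..m} \<longrightarrow> rk A \<ge> 0"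
      "\<forall>A B. A \<subseteq> {1..m} \<and> B \<subseteq> {1..m} \<longrightarrow> rk (A \<union> B) + rk (A \<inter> B) \<le> rk A + rk B"
      "\<forall>i\<in>{1..m}. rk {i} \<le> int (a i)"
      using poly_props[OF P] by blast+
    have BC: "B \<union> C \<subseteq> {1..m}" and ii: "{i} \<subseteq> {1..m}" using B CE iE by auto
    have sub: "rk ((B \<union> C) \<union> {i}) + rk ((B \<union> C) \<inter> {i}) \<le> rk (B \<union> C) + rk {i}"
      using Pd(2) BC ii by blast
    have "(B \<union> C) \<inter> {i} \<subseteq> {1..m}" using ii by blast
    then have nn: "rk ((B \<union> C) \<inter> {i}) \<ge> 0" using Pd(1) by blast
    have ai: "rk {i} \<le> int (a i)" using Pd(3) iE by blast
    have eqi: "B \<union> insert i C = (B \<union> C) \<union> {i}" by blast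
    have IH: "rk (B \<union> C) \<le> rk B + int (\<Sum>i\<in>C. a i)" using insert.IH[OF CE] .
    have "int (\<Sum>i\<in>insert i C. a i) = int (a i) + int (\<Sum>i\<in>C. a i)" using insert.hyps by simp
    then show ?case unfolding eqi using sub nn ai IH by linarith
  qed
qed

theorem proposition3p6:
  fixes m :: nat and a :: "nat \<Rightarrow> nat" and Et :: "'b set" and \<pi> :: "'b \<Rightarrow> nat"
    and rk :: "nat set \<Rightarrow> int"
  assumes "finite Et"
    and "card Et = (\<Sum>i\<in>{1..m}. a i)"
    and "\<pi> ` Et \<subseteq> {1..m}"
    and "\<forall>i\<in>{1..m}. card {x\<in>Et. \<pi> x = i} = a i"
    and "polymatroid_of_type m a rk"
  shows "\<forall>U. U \<subseteq> Et \<longrightarrow>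
           multisym_lift m \<pi> (polymatroid_dual m a rk) U
             = matroid_dual_rank Et (multisym_lift m \<pi> rk) U"
proof (intro allI impI)
  fix U assume U: "U \<subseteq> Et"
  define E where "E = {1..m}"
  define r where "r = rk E"
  have fU: "finite U" using U assms(1) finite_subset by blast
  have aA: "int (\<Sum>i\<in>A. a i) = int (card (Et - \<pi> -` (E - A)))" if "A \<subseteq> E" for A
  proof -
    have "Et - \<pi> -` (E - A) = {x\<in>Et. \<pi> x \<in> A}" using assms(3) that unfolding E_def by auto
    then show ?thesis using fiber_card[OF assms(1) _ assms(4), of A] that unfolding E_def by simp
  qed
  have LEt: "multisym_lift m \<pi> rk Et = r"
  proof -
    let ?S = "{rk A + int (card (Et - \<pi> -` A)) | A. A \<subseteq> {1..m}}"
    have "?S = (\<lambda>A. rk A + int (card (Et - \<pi> -` A))) ` Pow {1..m}" by auto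
    then have fin: "finite ?S" by simp
    have mem: "r \<in> ?S"
    proof -
      have "Et - \<pi> -` E = {}" using assms(3) unfolding E_def by auto
      then have "card (Et - \<pi> -` E) = 0" by (metis card.empty)
      then have "r = rk E + int (card (Et - \<pi> -` E))" unfolding r_def by simp
      then show ?thesis unfolding E_def by blast
    qed
    have lb: "\<forall>x\<in>?S. r \<le> x"
    proof
      fix x assume "x \<in> ?S"
      then obtain B where B: "B \<subseteq> E" and x: "x = rk B + int (card (Et - \<pi> -` B))"
        unfolding E_def by blast
      have "rk (B \<union> (E - B)) \<le> rk B + int (\<Sum>i\<in>E - B. a i)"
        using subadd[OF assms(5), of B "E - B"] B unfolding E_def by auto
      moreover have "B \<union> (E - B) = E" using B by blast
      moreover have "E - (E - B) = B" using B by blast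
      ultimately show "r \<le> x" using aA[of "E - B"] x unfolding r_def by auto
    qed
    have "Min ?S = r"
      by (rule Min_eqI[OF fin _ mem]) (use lb in blast)
    then show ?thesis unfolding multisym_lift_def .
  qed
  have key: "int (\<Sum>i\<in>A. a i) + rk (E - A) - r + int (card (U - \<pi> -` A))
      = int (card U) + (rk (E - A) + int (card ((Et - U) - \<pi> -` (E - A)))) - r"
    if A: "A \<subseteq> E" for A
  proof -
    have s1: "(\<Sum>i\<in>A. a i) = card (Et \<inter> \<pi> -` A)"
    proof -
      have "Et \<inter> \<pi> -` A = {x\<in>Et. \<pi> x \<in> A}" by auto
      then show ?thesis using fiber_card[OF assms(1) _ assms(4), of A] A unfolding E_def by simp
    qed
    have s2: "(Et - U) - \<pi> -` (E - A) = (Et - U) \<inter> \<pi> -` A"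
      using assms(3) A unfolding E_def by auto
    have s3: "card (Et \<inter> \<pi> -` A) = card (U \<inter> \<pi> -` A) + card ((Et - U) \<inter> \<pi> -` A)"
    proof -
      have "Et \<inter> \<pi> -` A = (U \<inter> \<pi> -` A) \<union> ((Et - U) \<inter> \<pi> -` A)" using U by blast
      moreover have "finite (U \<inter> \<pi> -` A)" "finite ((Et - U) \<inter> \<pi> -` A)" using fU assms(1) by auto
      ultimately show ?thesis by (simp add: card_Un_disjoint disjoint_iff)
    qed
    have s4: "card U = card (U \<inter> \<pi> -` A) + card (U - \<pi> -` A)"
      using card_Int_Diff[OF fU] by blast
    have n: "(\<Sum>i\<in>A. a i) + card (U - \<pi> -` A) = card U + card ((Et - U) - \<pi> -` (E - A))"
      unfolding s1 s2 using s3 s4 by linarith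
    have "int (\<Sum>i\<in>A. a i) + int (card (U - \<pi> -` A)) = int (card U) + int (card ((Et - U) - \<pi> -` (E - A)))"
      using n by (metis of_nat_add)
    then show ?thesis by linarith
  qed
  let ?T = "{rk B + int (card ((Et - U) - \<pi> -` B)) | B. B \<subseteq> E}"
  let ?f = "\<lambda>x. int (card U) + x - r"
  have setEq: "{polymatroid_dual m a rk A + int (card (U - \<pi> -` A)) | A. A \<subseteq> {1..m}} = ?f ` ?T"
  proof
    show "{polymatroid_dual m a rk A + int (card (U - \<pi> -` A)) | A. A \<subseteq> {1..m}} \<subseteq> ?f ` ?T"
    proof
      fix y assume "y \<in> {polymatroid_dual m a rk A + int (card (U - \<pi> -` A)) | A. A \<subseteq> {1..m}}"
      then obtain A where A: "A \<subseteq> E" and y: "y = polymatroid_dual m a rk A + int (card (U - \<pi> -` A))"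
        unfolding E_def by blast
      have d: "polymatroid_dual m a rk A = int (\<Sum>i\<in>A. a i) + rk (E - A) - r"
        unfolding polymatroid_dual_def r_def E_def ..
      have "y = ?f (rk (E - A) + int (card ((Et - U) - \<pi> -` (E - A))))"
        using key[OF A] y d by linarith
      moreover have "E - A \<subseteq> E" by blast
      ultimately show "y \<in> ?f ` ?T" by blast
    qed
  next
    show "?f ` ?T \<subseteq> {polymatroid_dual m a rk A + int (card (U - \<pi> -` A)) | A. A \<subseteq> {1..m}}"
    proof
      fix y assume "y \<in> ?f ` ?T"
      then obtain B where B: "B \<subseteq> E" and y: "y = ?f (rk B + int (card ((Et - U) - \<pi> -` B)))"
        by blast
      have EB: "E - (E - B) = B" using B by blast
      have d: "polymatroid_dual m a rk (E - B) = int (\<Sum>i\<in>E - B. a i) + rk (E - (E - B)) - r"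
        unfolding polymatroid_dual_def r_def E_def ..
      have k: "int (\<Sum>i\<in>E - B. a i) + rk (E - (E - B)) - r + int (card (U - \<pi> -` (E - B)))
      = int (card U) + (rk (E - (E - B)) + int (card ((Et - U) - \<pi> -` (E - (E - B))))) - r"
        by (rule key) blast
      have "y = polymatroid_dual m a rk (E - B) + int (card (U - \<pi> -` (E - B)))"
        using k y d unfolding EB by linarith
      then show "y \<in> {polymatroid_dual m a rk A + int (card (U - \<pi> -` A)) | A. A \<subseteq> {1..m}}"
        unfolding E_def by blast
    qed
  qed
  have "?T = (\<lambda>B. rk B + int (card ((Et - U) - \<pi> -` B))) ` Pow E" by auto
  then have finT: "finite ?T" unfolding E_def by simp
  have neT: "?T \<noteq> {}" by blast
  have mono: "mono ?f" by (auto simp: mono_def)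
  have "multisym_lift m \<pi> (polymatroid_dual m a rk) U = Min (?f ` ?T)"
    unfolding multisym_lift_def setEq ..
  also have "\<dots> = ?f (Min ?T)" using mono_Min_commute[OF mono finT neT] by simp
  also have "Min ?T = multisym_lift m \<pi> rk (Et - U)" unfolding multisym_lift_def E_def ..
  finally show "multisym_lift m \<pi> (polymatroid_dual m a rk) U
             = matroid_dual_rank Et (multisym_lift m \<pi> rk) U"
    unfolding matroid_dual_rank_def LEt by simp
qed

end
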